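(* Let $P,Q$ be persistence diagrams satisfying the standing assumptions, and let $d_T^{per}(P,Q)$ be defined from the randomly shifted quadtree as in the context. Then there is an absolute constant $C'$ such that $$\mathbb{E}\big[d_T^{per}(P,Q)\big]\le C'\log\Delta\cdot d_W(P,Q),$$ the expectation being over the random shift.
   Context: A persistence diagram is a finite multiset of points in $\mathbb{R}^2$. Let $L=\{(x,x)\mid x\in\mathbb{R}\}$ be the diagonal and $\pi(p)=\big(\tfrac{p.x+p.y}{2},\tfrac{p.x+p.y}{2}\big)$. An augmented matching for finite multisets $A,B\subset\mathbb{R}^2$ is a subset $\Gamma\subset (A\cup\pi(B))\times(B\cup\pi(A))$ such that each element of $A$ and of $B$ (with multiplicity) appears in exactly one pair, and each pair $(a,b)$ is of the form (1) $a\in A,b\in B$, (2) $a\in A,b=\pi(a)$, or (3) $a=\pi(b),b\in B$. $d_W(P,Q)=\min_\Gamma\sum_{(p,q)\in\Gamma}\|p-q\|_2$ over augmented matchings for $P,Q$. Standing assumptions: with $X=P\uplus Q$, the minimum distance between distinct points of $X$ is $1$, the minimum distance from any point of $X$ to $L$ is $1$, $X\subseteq[0,\Delta]^2$ with $\Delta$ (the spread of $X$) a power of $2$. Randomly shifted quadtree: $H$ is $[-\Delta,\Delta]^2$ translated by a random vector with coordinates chosen uniformly in $[0,\Delta]$. For $i=-1,0,\dots,\log_2\Delta$, $G_i$ is the grid of cells of side $2^i$ obtained by repeatedly halving $H$ in each coordinate. A cell is terminal if it intersects $L$. With $P(c),Q(c)$ the number of points of $P$, $Q$ in cell $c$, $$d_T^{per}(P,Q)=\sum_{i=-1}^{\log_2\Delta}2^i\sum_{c\in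 G_i,\ c\text{ non-terminal}}|P(c)-Q(c)|.$$ *)

theory Defs
  imports "HOL-Analysis.Analysis" "HOL-Library.Multiset"
begin

type_synonym point = "real \<times> real"

definition diag :: "point set" where
  "diag = {(x, x) | x. True}"

definition proj :: "point \<Rightarrow> point" where
  "proj p = ((fst p + snd p) / 2, (fst p + snd p) / 2)"

text \<open>An augmented matching is encoded as a multiset of tagged pairs:
  (Some a, Some b) is a pair of type (1), (Some a, None) is the pair (a, proj a)
  of type (2), and (None, Some b) is the pair (proj b, b) of type (3).
  Every element of A and of B (with multiplicity) occurs in exactly one pair.\<close>
definition aug_matching ::
  "point multiset \<Rightarrow> point multiset \<Rightarrow> (point option \<times> point option) multiset \<Rightarrow> bool" where
  "aug_matching A B \<Gamma> \<longleftrightarrow>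
     (\<forall>g \<in># \<Gamma>. g \<noteq> (None, None)) \<and>
     image_mset the (filter_mset (\<lambda>g. g \<noteq> None) (image_mset fst \<Gamma>)) = A \<and>
     image_mset the (filter_mset (\<lambda>g. g \<noteq> None) (image_mset snd \<Gamma>)) = B"

fun pair_cost :: "point option \<times> point option \<Rightarrow> real" where
  "pair_cost (Some a, Some b) = dist a b"
| "pair_cost (Some a, None) = dist a (proj a)"
| "pair_cost (None, Some b) = dist (proj b) b"
| "pair_cost (None, None) = 0"

definition matching_cost :: "(point option \<times> point option) multiset \<Rightarrow> real" where
  "matching_cost \<Gamma> = (\<Sum>g \<in># \<Gamma>. pair_cost g)"

definition dW :: "point multiset \<Rightarrow> point multiset \<Rightarrow> real" where
  "dW P Q = Min {matching_cost \<Gamma> | \<Gamma>. aug_matching P Q \<Gamma>}"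

text \<open>Randomly shifted quadtree with Delta = 2^m and shift v.
  H = [-Delta, Delta]^2 + v.  The grid G_i (i = -1 .. m) consists of the
  cells of side 2^i, indexed by (k, l) with k, l < 2^(m+1-i); cells are taken
  half-open, [a, a + 2^i) x [b, b + 2^i).\<close>
definition side :: "int \<Rightarrow> real" where
  "side i = (2::real) powi i"

definition ncells :: "nat \<Rightarrow> int \<Rightarrow> nat" where
  "ncells m i = 2 ^ nat (int m + 1 - i)"

definition cell :: "nat \<Rightarrow> point \<Rightarrow> int \<Rightarrow> nat \<Rightarrow> nat \<Rightarrow> point set" where
  "cell m v i k l =
     {p. fst v - 2^m + real k * side i \<le> fst p \<and> fst p < fst v - 2^m + real (k + 1) * side i \<and>
         snd v - 2^m + real l * side i \<le> snd p \<and> snd p < snd v - 2^m + real (l + 1) * side i}"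

definition terminal :: "point set \<Rightarrow> bool" where
  "terminal c \<longleftrightarrow> c \<inter> diag \<noteq> {}"

definition cnt :: "point multiset \<Rightarrow> point set \<Rightarrow> nat" where
  "cnt P c = size (filter_mset (\<lambda>p. p \<in> c) P)"

definition dT_per :: "nat \<Rightarrow> point \<Rightarrow> point multiset \<Rightarrow> point multiset \<Rightarrow> real" where
  "dT_per m v P Q =
     (\<Sum>i \<in> {-1..int m}. side i *
        (\<Sum>(k, l) \<in> {..<ncells m i} \<times> {..<ncells m i}.
           if terminal (cell m v i k l) then 0
           else \<bar>real (cnt P (cell m v i k l)) - real (cnt Q (cell m v i k l))\<bar>))"

definition standing_assms :: "point multiset \<Rightarrow> point multiset \<Rightarrow> real \<Rightarrow> bool" where
  "standing_assms P Q \<Delta> \<longleftrightarrow>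
     (let X = P + Q in
       (\<forall>p \<in># X. \<forall>q \<in># X. p \<noteq> q \<longrightarrow> dist p q \<ge> 1) \<and>
       ((\<exists>p \<in># X. \<exists>q \<in># X. p \<noteq> q) \<longrightarrow> (\<exists>p \<in># X. \<exists>q \<in># X. p \<noteq> q \<and> dist p q = 1)) \<and>
       (\<forall>p \<in># X. infdist p diag \<ge> 1) \<and>
       (X \<noteq> {#} \<longrightarrow> (\<exists>p \<in># X. infdist p diag = 1)) \<and>
       (\<forall>p \<in># X. 0 \<le> fst p \<and> fst p \<le> \<Delta> \<and> 0 \<le> snd p \<and> snd p \<le> \<Delta>))"

end

theory Submission
  imports Defs
begin


lemma floor_piece:
  fixes s c \<alpha> :: real
  assumes s: "s > 0"
  shows "((\<lambda>w. real_of_int \<lfloor>(c - w) / s\<rfloor>) has_integral (c - \<alpha> - s)) {\<alpha>..\<alpha>+s}"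
proof -
  define K where "K = \<lfloor>(c - \<alpha>) / s\<rfloor>"
  define w where "w = c - real_of_int K * s"
  have K1: "real_of_int K \<le> (c - \<alpha>) / s" and K2: "(c - \<alpha>) / s < real_of_int K + 1"
    unfolding K_def by linarith+
  have "real_of_int K * s \<le> c - \<alpha>" using K1 s by (simp add: pos_le_divide_eq)
  hence wa: "\<alpha> \<le> w" unfolding w_def by linarith
  have "c - \<alpha> < (real_of_int K + 1) * s" using K2 s by (simp add: pos_divide_less_eq)
  hence wb: "w \<le> \<alpha> + s" unfolding w_def by (simp add: algebra_simps)
  have i1: "((\<lambda>w. real_of_int \<lfloor>(c - w) / s\<rfloor>) has_integral (real_of_int K * (w - \<alpha>))) {\<alpha>..w}"
  proof -
    have "((\<lambda>x. real_of_int K) has_integral (real_of_int K * (w - \<alpha>))) {\<alpha>..w}"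
      using has_integral_const_real[of "real_of_int K" \<alpha> w] wa by (simp add: mult.commute)
    moreover have "real_of_int \<lfloor>(c - x) / s\<rfloor> = real_of_int K" if "x \<in> {\<alpha>..w}" for x
    proof -
      have "x \<le> w" "\<alpha> \<le> x" using that by auto
      hence "real_of_int K * s \<le> c - x" "c - x \<le> c - \<alpha>" unfolding w_def by linarith+
      hence "real_of_int K \<le> (c - x) / s" "(c - x) / s \<le> (c - \<alpha>) / s"
        using s by (simp_all add: pos_le_divide_eq divide_right_mono)
      thus ?thesis using K2 by (simp add: floor_eq_iff)
    qed
    ultimately show ?thesis
      using has_integral_cong[of "{\<alpha>..w}" "\<lambda>x. real_of_int \<lfloor>(c - x) / s\<rfloor>" "\<lambda>x. real_of_int K"] by auto
  qed
  have i2: "((\<lambda>w. real_of_int \<lfloor>(c - w) / s\<rfloor>) has_integral ((real_of_int K - 1) * (\<alpha> + s - w))) {w..\<alpha>+s}"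
  proof -
    have "((\<lambda>x. real_of_int K - 1) has_integral ((real_of_int K - 1) * (\<alpha> + s - w))) {w..\<alpha>+s}"
      using has_integral_const_real[of "real_of_int K - 1" w "\<alpha>+s"] wb by (simp add: mult.commute)
    moreover have "real_of_int \<lfloor>(c - x) / s\<rfloor> = real_of_int K - 1" if "x \<in> {w..\<alpha>+s} - {w}" for x
    proof -
      have "w < x" "x \<le> \<alpha> + s" using that by auto
      hence h1: "c - x < real_of_int K * s" and h2: "c - \<alpha> - s \<le> c - x" unfolding w_def by linarith+
      have "(c - x) / s < real_of_int K" using h1 s by (simp add: pos_divide_less_eq)
      moreover have "(c - \<alpha> - s) / s \<le> (c - x) / s" using h2 s by (simp add: divide_right_mono)
      hence "(c - \<alpha>) / s - 1 \<le> (c - x) / s" using s by (simp add: diff_divide_distrib)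
      ultimately have "\<lfloor>(c - x) / s\<rfloor> = K - 1" using K1 by (simp add: floor_eq_iff)
      thus ?thesis by simp
    qed
    ultimately show ?thesis
      using has_integral_spike_finite[of "{w}" "{w..\<alpha>+s}" "\<lambda>x. real_of_int \<lfloor>(c - x) / s\<rfloor>" "\<lambda>x. real_of_int K - 1"] by auto
  qed
  have "((\<lambda>w. real_of_int \<lfloor>(c - w) / s\<rfloor>) has_integral (real_of_int K * (w - \<alpha>) + (real_of_int K - 1) * (\<alpha> + s - w))) {\<alpha>..\<alpha>+s}"
    by (rule has_integral_combine[OF wa wb i1 i2])
  moreover have "real_of_int K * (w - \<alpha>) + (real_of_int K - 1) * (\<alpha> + s - w) = c - \<alpha> - s"
    unfolding w_def by (simp add: algebra_simps)
  ultimately show ?thesis by simp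
qed

lemma floor_N:
  fixes s c :: real
  assumes s: "s > 0"
  shows "((\<lambda>w. real_of_int \<lfloor>(c - w) / s\<rfloor>) has_integral (\<Sum>j<N. c - real j * s - s)) {0..real N * s}"
proof (induction N)
  case 0
  then show ?case using has_integral_refl(2)[of _ 0] by simp
next
  case (Suc N)
  have "((\<lambda>w. real_of_int \<lfloor>(c - w) / s\<rfloor>) has_integral (c - real N * s - s)) {real N * s..real N * s + s}"
    by (rule floor_piece[OF s])
  hence "((\<lambda>w. real_of_int \<lfloor>(c - w) / s\<rfloor>) has_integral ((\<Sum>j<N. c - real j * s - s) + (c - real N * s - s))) {0..real N * s + s}"
    using has_integral_combine[OF _ _ Suc.IH] s by auto
  moreover have "real (Suc N) * s = real N * s + s" by (simp add: algebra_simps)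
  moreover have "(\<Sum>j<Suc N. c - real j * s - s) = (\<Sum>j<N. c - real j * s - s) + (c - real N * s - s)" by simp
  ultimately show ?case by simp
qed

lemma floor_diff:
  fixes s a b :: real
  assumes s: "s > 0"
  shows "((\<lambda>w. real_of_int \<lfloor>(b - w) / s\<rfloor> - real_of_int \<lfloor>(a - w) / s\<rfloor>) has_integral (real N * (b - a))) {0..real N * s}"
proof -
  have "((\<lambda>w. real_of_int \<lfloor>(b - w) / s\<rfloor> - real_of_int \<lfloor>(a - w) / s\<rfloor>) has_integral
     ((\<Sum>j<N. b - real j * s - s) - (\<Sum>j<N. a - real j * s - s))) {0..real N * s}"
    by (intro has_integral_diff floor_N s)
  moreover have "(\<Sum>j<N. b - real j * s - s) - (\<Sum>j<N. a - real j * s - s) = real N * (b - a)"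
    by (simp add: sum_subtractf[symmetric] algebra_simps)
  ultimately show ?thesis by simp
qed



lemma cbox_pair_ind:
  "indicator (cbox (0::real,0::real) (D,D)) v = (indicator {0..D} (fst v) * indicator {0..D} (snd v) :: ennreal)"
  by (cases v) (auto simp: cbox_Pair_eq indicator_def)

lemma emeasure_box: "D \<ge> 0 \<Longrightarrow> emeasure lborel (cbox (0::real,0::real) (D,D)) = ennreal (D * D)"
  by (simp add: cbox_Pair_eq lborel_prod[symmetric] lborel.emeasure_pair_measure_Times ennreal_mult)

lemma nn_fst:
  fixes \<phi> :: "real \<Rightarrow> real"
  assumes [measurable]: "\<phi> \<in> borel_measurable borel"
  assumes D: "D \<ge> 0"
  shows "(\<integral>\<^sup>+v. ennreal (\<phi> (fst v)) * indicator (cbox (0,0) (D,D)) v \<partial>lborel)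
         = ennreal D * (\<integral>\<^sup>+x. ennreal (\<phi> x) * indicator {0..D} x \<partial>lborel)"
proof -
  have "(\<integral>\<^sup>+v. ennreal (\<phi> (fst v)) * indicator (cbox (0,0) (D,D)) v \<partial>lborel)
      = (\<integral>\<^sup>+v. ennreal (\<phi> (fst v)) * indicator (cbox (0,0) (D,D)) v \<partial>(lborel \<Otimes>\<^sub>M lborel))"
    by (simp add: lborel_prod)
  also have "\<dots> = (\<integral>\<^sup>+x. \<integral>\<^sup>+y. ennreal (\<phi> x) * indicator {0..D} x * indicator {0..D} y \<partial>lborel \<partial>lborel)"
    by (subst lborel.nn_integral_fst[symmetric]) (auto simp: cbox_pair_ind mult.assoc)
  also have "\<dots> = (\<integral>\<^sup>+x. ennreal (\<phi> x) * indicator {0..D} x * ennreal D \<partial>lborel)"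
    using D by (subst nn_integral_cmult) auto
  also have "\<dots> = ennreal D * (\<integral>\<^sup>+x. ennreal (\<phi> x) * indicator {0..D} x \<partial>lborel)"
    by (subst nn_integral_cmult[symmetric]) (auto simp: mult.commute)
  finally show ?thesis .
qed

lemma nn_snd:
  fixes \<phi> :: "real \<Rightarrow> real"
  assumes [measurable]: "\<phi> \<in> borel_measurable borel"
  assumes D: "D \<ge> 0"
  shows "(\<integral>\<^sup>+v. ennreal (\<phi> (snd v)) * indicator (cbox (0,0) (D,D)) v \<partial>lborel)
         = ennreal D * (\<integral>\<^sup>+x. ennreal (\<phi> x) * indicator {0..D} x \<partial>lborel)"
proof -
  have "(\<integral>\<^sup>+v. ennreal (\<phi> (snd v)) * indicator (cbox (0,0) (D,D)) v \<partial>lborel)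
      = (\<integral>\<^sup>+v. ennreal (\<phi> (snd v)) * indicator (cbox (0,0) (D,D)) v \<partial>(lborel \<Otimes>\<^sub>M lborel))"
    by (simp add: lborel_prod)
  also have "\<dots> = (\<integral>\<^sup>+x. \<integral>\<^sup>+y. indicator {0..D} x * (ennreal (\<phi> y) * indicator {0..D} y) \<partial>lborel \<partial>lborel)"
    by (subst lborel.nn_integral_fst[symmetric]) (auto simp: cbox_pair_ind mult_ac)
  also have "\<dots> = (\<integral>\<^sup>+x. indicator {0..D} x * (\<integral>\<^sup>+y. ennreal (\<phi> y) * indicator {0..D} y \<partial>lborel) \<partial>lborel)"
    by (subst nn_integral_cmult) auto
  also have "\<dots> = ennreal D * (\<integral>\<^sup>+x. ennreal (\<phi> x) * indicator {0..D} x \<partial>lborel)"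
    using D by (subst nn_integral_multc) auto
  finally show ?thesis .
qed



lemma core_le:
  fixes a b s :: real
  assumes s: "s > 0" and ab: "a \<le> b"
  shows "(\<integral>\<^sup>+x. ennreal \<bar>real_of_int \<lfloor>(b - x) / s\<rfloor> - real_of_int \<lfloor>(a - x) / s\<rfloor>\<bar> * indicator {0..real N * s} x \<partial>lborel)
        = ennreal (real N * \<bar>b - a\<bar>)"
proof -
  have mono: "\<lfloor>(a - x) / s\<rfloor> \<le> \<lfloor>(b - x) / s\<rfloor>" for x
    using s ab by (intro floor_mono divide_right_mono) auto
  define f where "f x = (real_of_int \<lfloor>(b - x) / s\<rfloor> - real_of_int \<lfloor>(a - x) / s\<rfloor>) * indicator {0..real N * s} x" for x
  have "((\<lambda>x. if x \<in> {0..real N * s} then real_of_int \<lfloor>(b - x) / s\<rfloor> - real_of_int \<lfloor>(a - x) / s\<rfloor> else 0)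
        has_integral (real N * (b - a))) UNIV"
    by (subst has_integral_restrict_UNIV) (rule floor_diff[OF s])
  hence "(f has_integral (real N * (b - a))) UNIV"
    by (rule has_integral_eq[rotated]) (simp add: f_def indicator_def)
  moreover have fm: "f \<in> borel_measurable borel" unfolding f_def by measurable
  moreover have fnn: "\<And>x. 0 \<le> f x" by (auto simp: f_def mono)
  ultimately have "integral\<^sup>N lborel f = ennreal (real N * (b - a))"
    using nn_integral_has_integral_lborel by blast
  moreover have "(\<integral>\<^sup>+x. ennreal \<bar>real_of_int \<lfloor>(b - x) / s\<rfloor> - real_of_int \<lfloor>(a - x) / s\<rfloor>\<bar> * indicator {0..real N * s} x \<partial>lborel)
      = integral\<^sup>N lborel f"
    by (intro nn_integral_cong) (auto simp: f_def indicator_def mono)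
  ultimately show ?thesis using ab by simp
qed

lemma core:
  fixes a b s :: real
  assumes s: "s > 0"
  shows "(\<integral>\<^sup>+x. ennreal \<bar>real_of_int \<lfloor>(b - x) / s\<rfloor> - real_of_int \<lfloor>(a - x) / s\<rfloor>\<bar> * indicator {0..real N * s} x \<partial>lborel)
        = ennreal (real N * \<bar>b - a\<bar>)"
proof (cases "a \<le> b")
  case True
  then show ?thesis using core_le[OF s] by blast
next
  case False
  then show ?thesis using core_le[OF s, of b a N] by (simp add: abs_minus_commute)
qed

lemma E_both:
  fixes a b s :: real and \<pi> :: "real \<times> real \<Rightarrow> real"
  assumes s: "s > 0" and N: "N > 0" and D: "D = real N * s"
  and \<pi>: "\<pi> = fst \<or> \<pi> = snd"
  shows "integrable (uniform_measure lborel (cbox (0,0) (D,D))) (\<lambda>v. \<bar>real_of_int \<lfloor>(b - \<pi> v) / s\<rfloor> - real_of_int \<lfloor>(a - \<pi> v) / s\<rfloor>\<bar>)"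
    "integral\<^sup>L (uniform_measure lborel (cbox (0,0) (D,D))) (\<lambda>v. \<bar>real_of_int \<lfloor>(b - \<pi> v) / s\<rfloor> - real_of_int \<lfloor>(a - \<pi> v) / s\<rfloor>\<bar>)
       = real N * \<bar>b - a\<bar> / D"
proof -
  let ?\<phi> = "\<lambda>x. \<bar>real_of_int \<lfloor>(b - x) / s\<rfloor> - real_of_int \<lfloor>(a - x) / s\<rfloor>\<bar>"
  let ?M = "uniform_measure lborel (cbox (0::real,0::real) (D,D))"
  have Dpos: "D > 0" using s N D by simp
  have phim[measurable]: "?\<phi> \<in> borel_measurable borel" by measurable
  have pim[measurable]: "\<pi> \<in> borel_measurable borel" using \<pi> by (auto intro!: borel_measurable_continuous_onI continuous_intros)
  have "(\<integral>\<^sup>+v. ennreal (?\<phi> (\<pi> v)) \<partial>?M)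
       = (\<integral>\<^sup>+v. ennreal (?\<phi> (\<pi> v)) * indicator (cbox (0,0) (D,D)) v \<partial>lborel) / emeasure lborel (cbox (0::real,0::real) (D,D))"
    by (rule nn_integral_uniform_measure) auto
  also have "(\<integral>\<^sup>+v. ennreal (?\<phi> (\<pi> v)) * indicator (cbox (0,0) (D,D)) v \<partial>lborel) = ennreal D * ennreal (real N * \<bar>b - a\<bar>)"
    using \<pi> nn_fst[OF phim, of D] nn_snd[OF phim, of D] core[OF s, of b a N] Dpos D by auto
  also have "emeasure lborel (cbox (0::real,0::real) (D,D)) = ennreal (D * D)"
    using Dpos by (simp add: emeasure_box)
  also have "ennreal D * ennreal (real N * \<bar>b - a\<bar>) / ennreal (D * D) = ennreal (real N * \<bar>b - a\<bar> / D)"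
    using Dpos by (simp add: ennreal_mult[symmetric] divide_ennreal)
  finally have nn: "(\<integral>\<^sup>+v. ennreal (?\<phi> (\<pi> v)) \<partial>?M) = ennreal (real N * \<bar>b - a\<bar> / D)" .
  show "integrable ?M (\<lambda>v. ?\<phi> (\<pi> v))"
    by (rule integrableI_nonneg) (auto simp: nn)
  show "integral\<^sup>L ?M (\<lambda>v. ?\<phi> (\<pi> v)) = real N * \<bar>b - a\<bar> / D"
    using Dpos by (subst integral_eq_nn_integral) (auto simp: nn)
qed



definition ixf :: "nat \<Rightarrow> point \<Rightarrow> int \<Rightarrow> point \<Rightarrow> int" where
  "ixf m v i p = \<lfloor>(fst p + 2^m - fst v) / side i\<rfloor>"
definition iyf :: "nat \<Rightarrow> point \<Rightarrow> int \<Rightarrow> point \<Rightarrow> int" where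
  "iyf m v i p = \<lfloor>(snd p + 2^m - snd v) / side i\<rfloor>"

lemma side_pos: "side i > 0"
  by (simp add: side_def)

lemma mem_cell: "p \<in> cell m v i k l \<longleftrightarrow> ixf m v i p = int k \<and> iyf m v i p = int l"
  using side_pos[of i]
  by (auto simp: cell_def ixf_def iyf_def floor_eq_iff pos_le_divide_eq pos_divide_less_eq algebra_simps)

lemma sum_cells_one:
  "(\<Sum>(k,l)\<in>{..<n}\<times>{..<n}. if p \<in> cell m v i k l then 1 else 0 :: real) \<le> 1"
proof -
  have "(\<Sum>(k,l)\<in>{..<n}\<times>{..<n}. if p \<in> cell m v i k l then 1 else 0 :: real)
      = (\<Sum>x\<in>{..<n}\<times>{..<n}. of_bool (p \<in> cell m v i (fst x) (snd x)))"
    by (intro sum.cong) auto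
  also have "\<dots> = real (card (({..<n}\<times>{..<n}) \<inter> {x. p \<in> cell m v i (fst x) (snd x)}))"
    by simp
  also have "card (({..<n}\<times>{..<n}) \<inter> {x. p \<in> cell m v i (fst x) (snd x)}) \<le> card {(nat (ixf m v i p), nat (iyf m v i p))}"
    by (intro card_mono) (auto simp: mem_cell)
  finally show ?thesis by simp
qed

lemma pair_level:
  "(\<Sum>(k,l)\<in>{..<n}\<times>{..<n}. \<bar>(if a \<in> cell m v i k l then 1 else 0) - (if b \<in> cell m v i k l then 1 else 0)\<bar> :: real)
   \<le> 2 * (\<bar>real_of_int (ixf m v i a) - real_of_int (ixf m v i b)\<bar> + \<bar>real_of_int (iyf m v i a) - real_of_int (iyf m v i b)\<bar>)"
proof (cases "ixf m v i a = ixf m v i b \<and> iyf m v i a = iyf m v i b")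
  case True
  hence "\<And>k l. a \<in> cell m v i k l \<longleftrightarrow> b \<in> cell m v i k l" by (simp add: mem_cell)
  thus ?thesis by simp
next
  case False
  hence h1: "1 \<le> \<bar>real_of_int (ixf m v i a) - real_of_int (ixf m v i b)\<bar> + \<bar>real_of_int (iyf m v i a) - real_of_int (iyf m v i b)\<bar>"
    by (auto simp flip: of_int_diff) 
  have "(\<Sum>(k,l)\<in>{..<n}\<times>{..<n}. \<bar>(if a \<in> cell m v i k l then 1 else 0) - (if b \<in> cell m v i k l then 1 else 0)\<bar> :: real)
     \<le> (\<Sum>(k,l)\<in>{..<n}\<times>{..<n}. (if a \<in> cell m v i k l then 1 else 0) + (if b \<in> cell m v i k l then 1 else 0) :: real)"
    by (intro sum_mono) auto
  also have "\<dots> = (\<Sum>(k,l)\<in>{..<n}\<times>{..<n}. if a \<in> cell m v i k l then 1 else 0 :: real) + (\<Sum>(k,l)\<in>{..<n}\<times>{..<n}. if b \<in> cell m v i k l then 1 else 0 :: real)"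
    by (simp add: sum.distrib case_prod_beta)
  also have "\<dots> \<le> 2" using sum_cells_one[where p=a and n=n and m=m and v=v and i=i] sum_cells_one[where p=b and n=n and m=m and v=v and i=i] by linarith
  finally show ?thesis using h1 by (smt (verit))
qed



definition indo :: "point set \<Rightarrow> point option \<Rightarrow> real" where
  "indo c x = (case x of Some p \<Rightarrow> if p \<in> c then 1 else 0 | None \<Rightarrow> 0)"

lemma cnt_gen:
  "real (size (filter_mset (\<lambda>p. p \<in> c) (image_mset the (filter_mset (\<lambda>x. x \<noteq> None) (image_mset h \<Gamma>)))))
   = (\<Sum>g\<in>#\<Gamma>. indo c (h g))"
  by (induction \<Gamma>) (auto simp: indo_def split: option.splits)

lemma cntP: "aug_matching P Q \<Gamma> \<Longrightarrow> real (cnt P c) = (\<Sum>g\<in>#\<Gamma>. indo c (fst g))"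
  unfolding aug_matching_def cnt_def using cnt_gen[of c fst \<Gamma>] by auto

lemma cntQ: "aug_matching P Q \<Gamma> \<Longrightarrow> real (cnt Q c) = (\<Sum>g\<in>#\<Gamma>. indo c (snd g))"
  unfolding aug_matching_def cnt_def using cnt_gen[of c snd \<Gamma>] by auto

fun ep1 :: "point option \<times> point option \<Rightarrow> point" where
  "ep1 (Some a, _) = a"
| "ep1 (None, Some b) = proj b"
| "ep1 (None, None) = undefined"

fun ep2 :: "point option \<times> point option \<Rightarrow> point" where
  "ep2 (_, Some b) = b"
| "ep2 (Some a, None) = proj a"
| "ep2 (None, None) = undefined"

lemma proj_diag: "proj p \<in> diag"
  unfolding diag_def proj_def by blast

lemma ind1_ep: "g \<noteq> (None, None) \<Longrightarrow> \<not> terminal c \<Longrightarrow> indo c (fst g) = (if ep1 g \<in> c then 1 else 0)"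
  using proj_diag by (cases g rule: ep1.cases) (auto simp: indo_def terminal_def)

lemma ind2_ep: "g \<noteq> (None, None) \<Longrightarrow> \<not> terminal c \<Longrightarrow> indo c (snd g) = (if ep2 g \<in> c then 1 else 0)"
  using proj_diag by (cases g rule: ep2.cases) (auto simp: indo_def terminal_def)

lemma pair_cost_ep: "g \<noteq> (None, None) \<Longrightarrow> pair_cost g = dist (ep1 g) (ep2 g)"
  by (cases g; cases "fst g"; cases "snd g") auto

lemma sum_mset_nonneg_real: "(\<And>g. g \<in># \<Gamma> \<Longrightarrow> 0 \<le> (f g :: real)) \<Longrightarrow> 0 \<le> (\<Sum>g\<in>#\<Gamma>. f g)"
  by (induction \<Gamma>) auto

lemma sum_mset_abs_le: "\<bar>\<Sum>g\<in>#\<Gamma>. (f g :: real)\<bar> \<le> (\<Sum>g\<in>#\<Gamma>. \<bar>f g\<bar>)"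
  by (induction \<Gamma>) (auto intro: order.trans[OF abs_triangle_ineq])

lemma sum_mset_mono_real: "(\<And>g. g \<in># \<Gamma> \<Longrightarrow> (f g :: real) \<le> h g) \<Longrightarrow> (\<Sum>g\<in>#\<Gamma>. f g) \<le> (\<Sum>g\<in>#\<Gamma>. h g)"
  by (induction \<Gamma>) (auto intro: add_mono)

lemma sum_mset_diff_real: "(\<Sum>g\<in>#\<Gamma>. (f g :: real) - h g) = (\<Sum>g\<in>#\<Gamma>. f g) - (\<Sum>g\<in>#\<Gamma>. h g)"
  by (induction \<Gamma>) auto

lemma sum_swap_mset: "(\<Sum>x\<in>A. \<Sum>g\<in>#\<Gamma>. (f x g :: real)) = (\<Sum>g\<in>#\<Gamma>. \<Sum>x\<in>A. f x g)"
  by (induction \<Gamma>) (auto simp: sum.distrib)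

lemma sum_mset_cmult: "(\<Sum>g\<in>#\<Gamma>. c * (f g :: real)) = c * (\<Sum>g\<in>#\<Gamma>. f g)"
  by (induction \<Gamma>) (auto simp: algebra_simps)

definition Fx :: "nat \<Rightarrow> point \<Rightarrow> int \<Rightarrow> point option \<times> point option \<Rightarrow> real" where
  "Fx m v i g = \<bar>real_of_int \<lfloor>(fst (ep1 g) + 2^m - fst v) / side i\<rfloor> - real_of_int \<lfloor>(fst (ep2 g) + 2^m - fst v) / side i\<rfloor>\<bar>"
definition Fy :: "nat \<Rightarrow> point \<Rightarrow> int \<Rightarrow> point option \<times> point option \<Rightarrow> real" where
  "Fy m v i g = \<bar>real_of_int \<lfloor>(snd (ep1 g) + 2^m - snd v) / side i\<rfloor> - real_of_int \<lfloor>(snd (ep2 g) + 2^m - snd v) / side i\<rfloor>\<bar>"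

lemma level_bound:
  assumes \<Gamma>: "aug_matching P Q \<Gamma>"
  shows "(\<Sum>(k, l) \<in> {..<n} \<times> {..<n}.
           if terminal (cell m v i k l) then 0
           else \<bar>real (cnt P (cell m v i k l)) - real (cnt Q (cell m v i k l))\<bar>)
        \<le> (\<Sum>g\<in>#\<Gamma>. 2 * (Fx m v i g + Fy m v i g))"
proof -
  have nn: "g \<in># \<Gamma> \<Longrightarrow> g \<noteq> (None, None)" for g using \<Gamma> by (auto simp: aug_matching_def)
  have "(\<Sum>(k, l) \<in> {..<n} \<times> {..<n}.
           if terminal (cell m v i k l) then 0
           else \<bar>real (cnt P (cell m v i k l)) - real (cnt Q (cell m v i k l))\<bar>)
     \<le> (\<Sum>(k, l) \<in> {..<n} \<times> {..<n}. \<Sum>g\<in>#\<Gamma>.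
           \<bar>(if ep1 g \<in> cell m v i k l then 1 else 0) - (if ep2 g \<in> cell m v i k l then 1 else 0)\<bar>)"
  proof (intro sum_mono, clarify)
    fix k l
    show "(if terminal (cell m v i k l) then 0
           else \<bar>real (cnt P (cell m v i k l)) - real (cnt Q (cell m v i k l))\<bar>)
       \<le> (\<Sum>g\<in>#\<Gamma>. \<bar>(if ep1 g \<in> cell m v i k l then 1 else 0) - (if ep2 g \<in> cell m v i k l then 1 else 0)\<bar>)"
    proof (cases "terminal (cell m v i k l)")
      case True
      then show ?thesis by (simp add: sum_mset_nonneg_real)
    next
      case False
      have "real (cnt P (cell m v i k l)) - real (cnt Q (cell m v i k l))
          = (\<Sum>g\<in>#\<Gamma>. (if ep1 g \<in> cell m v i k l then 1 else 0) - (if ep2 g \<in> cell m v i k l then 1 else 0))"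
        unfolding cntP[OF \<Gamma>] cntQ[OF \<Gamma>] sum_mset_diff_real[symmetric]
        by (intro arg_cong[where f=sum_mset] image_mset_cong) (auto simp: ind1_ep ind2_ep False nn)
      then show ?thesis using False sum_mset_abs_le by simp
    qed
  qed
  also have "\<dots> = (\<Sum>g\<in>#\<Gamma>. \<Sum>(k, l) \<in> {..<n} \<times> {..<n}.
           \<bar>(if ep1 g \<in> cell m v i k l then 1 else 0) - (if ep2 g \<in> cell m v i k l then 1 else 0)\<bar>)"
    by (simp add: case_prod_beta sum_swap_mset)
  also have "\<dots> \<le> (\<Sum>g\<in>#\<Gamma>. 2 * (Fx m v i g + Fy m v i g))"
    by (intro sum_mset_mono_real order.trans[OF pair_level]) (simp add: Fx_def Fy_def ixf_def iyf_def)
  finally show ?thesis .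
qed

definition U :: "nat \<Rightarrow> (point option \<times> point option) multiset \<Rightarrow> point \<Rightarrow> real" where
  "U m \<Gamma> v = (\<Sum>g\<in>#\<Gamma>. \<Sum>i\<in>{-1..int m}. side i * (2 * (Fx m v i g + Fy m v i g)))"

lemma dT_le_U:
  assumes \<Gamma>: "aug_matching P Q \<Gamma>"
  shows "dT_per m v P Q \<le> U m \<Gamma> v"
proof -
  have "dT_per m v P Q \<le> (\<Sum>i\<in>{-1..int m}. side i * (\<Sum>g\<in>#\<Gamma>. 2 * (Fx m v i g + Fy m v i g)))"
    unfolding dT_per_def
    by (intro sum_mono mult_left_mono level_bound[OF \<Gamma>]) (auto simp: less_imp_le[OF side_pos])
  also have "\<dots> = U m \<Gamma> v"
    by (simp add: U_def sum_mset_cmult[symmetric] sum_swap_mset)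
  finally show ?thesis .
qed



lemma level_N:
  assumes "i \<le> int m"
  shows "real ((2::nat) ^ nat (int m - i)) * side i = 2 ^ m"
proof -
  have "real ((2::nat) ^ nat (int m - i)) = (2::real) powi (int m - i)"
    using assms by (simp flip: power_int_of_nat)
  moreover have "(2::real) powi (int m - i) * 2 powi i = 2 powi (int m - i + i)"
    using power_int_add[of "2::real" "int m - i" i] by simp
  ultimately show ?thesis by (simp add: side_def)
qed

abbreviation UM :: "nat \<Rightarrow> point measure" where
  "UM m \<equiv> uniform_measure lborel (cbox (0,0) (2^m, 2^m))"

lemma term_int:
  assumes i: "i \<in> {-1..int m}"
  shows "integrable (UM m) (\<lambda>v. side i * (2 * (Fx m v i g + Fy m v i g)))"
    "integral\<^sup>L (UM m) (\<lambda>v. side i * (2 * (Fx m v i g + Fy m v i g)))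
      = 2 * (\<bar>fst (ep1 g) - fst (ep2 g)\<bar> + \<bar>snd (ep1 g) - snd (ep2 g)\<bar>)"
proof -
  define N where "N = (2::nat) ^ nat (int m - i)"
  have NS: "real N * side i = 2 ^ m" using level_N i by (auto simp: N_def)
  have N: "N > 0" by (simp add: N_def)
  have D: "(2::real) ^ m = real N * side i" using NS by simp
  note ex = E_both[OF side_pos N D, where \<pi> = fst, simplified]
  note ey = E_both[OF side_pos N D, where \<pi> = snd, simplified]
  have ix: "integrable (UM m) (\<lambda>v. Fx m v i g)"
    unfolding Fx_def by (rule ex(1))
  have iy: "integrable (UM m) (\<lambda>v. Fy m v i g)"
    unfolding Fy_def by (rule ey(1))
  have vx: "integral\<^sup>L (UM m) (\<lambda>v. Fx m v i g) = real N * \<bar>fst (ep1 g) - fst (ep2 g)\<bar> / 2 ^ m"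
    unfolding Fx_def by (subst ex(2)) simp
  have vy: "integral\<^sup>L (UM m) (\<lambda>v. Fy m v i g) = real N * \<bar>snd (ep1 g) - snd (ep2 g)\<bar> / 2 ^ m"
    unfolding Fy_def by (subst ey(2)) simp
  show "integrable (UM m) (\<lambda>v. side i * (2 * (Fx m v i g + Fy m v i g)))"
    using ix iy by auto
  have "integral\<^sup>L (UM m) (\<lambda>v. side i * (2 * (Fx m v i g + Fy m v i g)))
      = side i * (2 * (real N * \<bar>fst (ep1 g) - fst (ep2 g)\<bar> / 2 ^ m + real N * \<bar>snd (ep1 g) - snd (ep2 g)\<bar> / 2 ^ m))"
    using ix iy vx vy by simp
  also have "\<dots> = 2 * (\<bar>fst (ep1 g) - fst (ep2 g)\<bar> + \<bar>snd (ep1 g) - snd (ep2 g)\<bar>) * (real N * side i) / 2 ^ m"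
    by (simp add: field_simps)
  also have "\<dots> = 2 * (\<bar>fst (ep1 g) - fst (ep2 g)\<bar> + \<bar>snd (ep1 g) - snd (ep2 g)\<bar>)"
    unfolding NS by simp
  finally show "integral\<^sup>L (UM m) (\<lambda>v. side i * (2 * (Fx m v i g + Fy m v i g)))
      = 2 * (\<bar>fst (ep1 g) - fst (ep2 g)\<bar> + \<bar>snd (ep1 g) - snd (ep2 g)\<bar>)" .
qed

lemma integrable_sum_mset:
  "(\<And>g. g \<in># \<Gamma> \<Longrightarrow> integrable M (f g)) \<Longrightarrow> integrable M (\<lambda>x. \<Sum>g\<in>#\<Gamma>. (f g x :: real))"
  by (induction \<Gamma>) auto

lemma integral_sum_mset:
  "(\<And>g. g \<in># \<Gamma> \<Longrightarrow> integrable M (f g)) \<Longrightarrow> integral\<^sup>L M (\<lambda>x. \<Sum>g\<in>#\<Gamma>. (f g x :: real)) = (\<Sum>g\<in>#\<Gamma>. integral\<^sup>L M (f g))"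
proof (induction \<Gamma>)
  case empty
  then show ?case by simp
next
  case (add x \<Gamma>)
  have "integrable M (\<lambda>y. \<Sum>g\<in>#\<Gamma>. f g y)" using add.prems by (intro integrable_sum_mset) auto
  then show ?case using add by simp
qed

lemma U_int:
  assumes \<Gamma>: "aug_matching P Q \<Gamma>"
  shows "integrable (UM m) (U m \<Gamma>)" "integral\<^sup>L (UM m) (U m \<Gamma>) \<le> 4 * (real m + 2) * matching_cost \<Gamma>"
proof -
  have ti: "integrable (UM m) (\<lambda>v. \<Sum>i\<in>{-1..int m}. side i * (2 * (Fx m v i g + Fy m v i g)))" for g
  proof (rule Bochner_Integration.integrable_sum)
    fix i assume "i \<in> {-1..int m}"
    thus "integrable (UM m) (\<lambda>v. side i * (2 * (Fx m v i g + Fy m v i g)))" by (rule term_int(1))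
  qed
  show "integrable (UM m) (U m \<Gamma>)"
    unfolding U_def[abs_def] by (intro integrable_sum_mset ti)
  have "integral\<^sup>L (UM m) (U m \<Gamma>) = (\<Sum>g\<in>#\<Gamma>. integral\<^sup>L (UM m) (\<lambda>v. \<Sum>i\<in>{-1..int m}. side i * (2 * (Fx m v i g + Fy m v i g))))"
    unfolding U_def[abs_def] by (intro integral_sum_mset ti)
  also have "\<dots> = (\<Sum>g\<in>#\<Gamma>. \<Sum>i\<in>{-1..int m}. 2 * (\<bar>fst (ep1 g) - fst (ep2 g)\<bar> + \<bar>snd (ep1 g) - snd (ep2 g)\<bar>))"
    using term_int by (intro arg_cong[where f=sum_mset] image_mset_cong) (simp add: Bochner_Integration.integral_sum)
  also have "\<dots> = (\<Sum>g\<in>#\<Gamma>. (real m + 2) * (2 * (\<bar>fst (ep1 g) - fst (ep2 g)\<bar> + \<bar>snd (ep1 g) - snd (ep2 g)\<bar>)))"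
    by (intro arg_cong[where f=sum_mset] image_mset_cong) simp
  also have "\<dots> \<le> (\<Sum>g\<in>#\<Gamma>. 4 * (real m + 2) * pair_cost g)"
  proof (intro sum_mset_mono_real)
    fix g assume g: "g \<in># \<Gamma>"
    hence "g \<noteq> (None, None)" using \<Gamma> by (auto simp: aug_matching_def)
    hence pc: "pair_cost g = dist (ep1 g) (ep2 g)" by (rule pair_cost_ep)
    have "\<bar>fst (ep1 g) - fst (ep2 g)\<bar> \<le> dist (ep1 g) (ep2 g)"
      using dist_fst_le[of "ep1 g" "ep2 g"] by (simp add: dist_real_def)
    moreover have "\<bar>snd (ep1 g) - snd (ep2 g)\<bar> \<le> dist (ep1 g) (ep2 g)"
      using dist_snd_le[of "ep1 g" "ep2 g"] by (simp add: dist_real_def)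
    ultimately have "2 * (\<bar>fst (ep1 g) - fst (ep2 g)\<bar> + \<bar>snd (ep1 g) - snd (ep2 g)\<bar>) \<le> 4 * dist (ep1 g) (ep2 g)"
      by (smt (verit))
    hence "(real m + 2) * (2 * (\<bar>fst (ep1 g) - fst (ep2 g)\<bar> + \<bar>snd (ep1 g) - snd (ep2 g)\<bar>))
        \<le> (real m + 2) * (4 * dist (ep1 g) (ep2 g))"
      by (rule mult_left_mono) simp
    also have "\<dots> = 4 * (real m + 2) * pair_cost g" by (simp add: pc algebra_simps)
    finally show "(real m + 2) * (2 * (\<bar>fst (ep1 g) - fst (ep2 g)\<bar> + \<bar>snd (ep1 g) - snd (ep2 g)\<bar>))
        \<le> 4 * (real m + 2) * pair_cost g" .
  qed
  also have "\<dots> = 4 * (real m + 2) * matching_cost \<Gamma>"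
    by (simp add: matching_cost_def sum_mset_cmult)
  finally show "integral\<^sup>L (UM m) (U m \<Gamma>) \<le> 4 * (real m + 2) * matching_cost \<Gamma>" .
qed



lemma size_le:
  "(\<And>g. g \<in># \<Gamma> \<Longrightarrow> g \<noteq> (None, None)) \<Longrightarrow>
   size \<Gamma> \<le> size (filter_mset (\<lambda>x. x \<noteq> None) (image_mset fst \<Gamma>)) + size (filter_mset (\<lambda>x. x \<noteq> None) (image_mset snd \<Gamma>))"
proof (induction \<Gamma>)
  case empty
  then show ?case by simp
next
  case (add x \<Gamma>)
  then show ?case by (cases x) auto
qed

lemma aug_size: "aug_matching P Q \<Gamma> \<Longrightarrow> size \<Gamma> \<le> size P + size Q"
  unfolding aug_matching_def using size_le[of \<Gamma>] by auto

lemma aug_set: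
  assumes "aug_matching P Q \<Gamma>"
  shows "set_mset \<Gamma> \<subseteq> (insert None (Some ` set_mset P)) \<times> (insert None (Some ` set_mset Q))"
proof
  fix g assume g: "g \<in># \<Gamma>"
  obtain x y where gxy: "g = (x, y)" by (cases g)
  have "x \<in> insert None (Some ` set_mset P)"
  proof (cases x)
    case (Some a)
    hence "Some a \<in># filter_mset (\<lambda>x. x \<noteq> None) (image_mset fst \<Gamma>)" using g gxy by force
    hence "a \<in># image_mset the (filter_mset (\<lambda>x. x \<noteq> None) (image_mset fst \<Gamma>))"
      by (metis option.sel image_eqI multiset.set_map)
    moreover have "image_mset the (filter_mset (\<lambda>x. x \<noteq> None) (image_mset fst \<Gamma>)) = P"
      using assms unfolding aug_matching_def by blast
    ultimately have "a \<in># P" by metis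
    thus ?thesis using Some by auto
  qed simp
  moreover have "y \<in> insert None (Some ` set_mset Q)"
  proof (cases y)
    case (Some a)
    hence "Some a \<in># filter_mset (\<lambda>x. x \<noteq> None) (image_mset snd \<Gamma>)" using g gxy by force
    hence "a \<in># image_mset the (filter_mset (\<lambda>x. x \<noteq> None) (image_mset snd \<Gamma>))"
      by (metis option.sel image_eqI multiset.set_map)
    moreover have "image_mset the (filter_mset (\<lambda>x. x \<noteq> None) (image_mset snd \<Gamma>)) = Q"
      using assms unfolding aug_matching_def by blast
    ultimately have "a \<in># Q" by metis
    thus ?thesis using Some by auto
  qed simp
  ultimately show "g \<in> (insert None (Some ` set_mset P)) \<times> (insert None (Some ` set_mset Q))"
    using gxy by auto
qed

lemma the_Some_mset: "image_mset the (filter_mset (\<lambda>x. x \<noteq> None) (image_mset Some P)) = P"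
  by (induction P) auto

lemma None_mset: "filter_mset (\<lambda>x. x \<noteq> None) (image_mset (\<lambda>_. None) Q) = {#}"
  by (induction Q) auto

lemma triv_matching:
  "aug_matching P Q (image_mset (\<lambda>a. (Some a, None)) P + image_mset (\<lambda>b. (None, Some b)) Q)"
proof -
  have f: "image_mset fst (image_mset (\<lambda>a. (Some a, None :: point option)) P + image_mset (\<lambda>b. (None, Some b)) Q)
     = image_mset Some P + image_mset (\<lambda>_. None) Q"
    by (simp add: multiset.map_comp comp_def)
  have s: "image_mset snd (image_mset (\<lambda>a. (Some a, None)) P + image_mset (\<lambda>b. (None, Some b)) Q)
     = image_mset (\<lambda>_. None) P + image_mset Some Q"
    by (simp add: multiset.map_comp comp_def)
  have 1: "image_mset the (filter_mset (\<lambda>g. g \<noteq> None) (image_mset fst (image_mset (\<lambda>a. (Some a, None)) P + image_mset (\<lambda>b. (None, Some b)) Q))) = P"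
    unfolding f by (simp only: filter_union_mset image_mset_union the_Some_mset None_mset) simp
  have 2: "image_mset the (filter_mset (\<lambda>g. g \<noteq> None) (image_mset snd (image_mset (\<lambda>a. (Some a, None)) P + image_mset (\<lambda>b. (None, Some b)) Q))) = Q"
    unfolding s by (simp only: filter_union_mset image_mset_union the_Some_mset None_mset) simp
  show ?thesis
    unfolding aug_matching_def using 1 2 by auto
qed

lemma dW_att: "\<exists>\<Gamma>. aug_matching P Q \<Gamma> \<and> dW P Q = matching_cost \<Gamma>"
proof -
  define S where "S = (insert None (Some ` set_mset P)) \<times> (insert None (Some ` set_mset Q))"
  define A where "A = {matching_cost \<Gamma> | \<Gamma>. aug_matching P Q \<Gamma>}"
  define B where "B = {\<Gamma>. set_mset \<Gamma> \<subseteq> S \<and> size \<Gamma> \<le> size P + size Q}"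
  have AB: "A \<subseteq> matching_cost ` B"
  proof
    fix x assume "x \<in> A"
    then obtain \<Gamma> where \<Gamma>: "aug_matching P Q \<Gamma>" and x: "x = matching_cost \<Gamma>" unfolding A_def by blast
    have "\<Gamma> \<in> B" unfolding B_def S_def using aug_set[OF \<Gamma>] aug_size[OF \<Gamma>] by simp
    thus "x \<in> matching_cost ` B" using x by (rule rev_image_eqI)
  qed
  have fS: "finite S" unfolding S_def by auto
  have "B \<subseteq> (\<Union>n\<in>{..size P + size Q}. multisets_of_size S n)"
    unfolding B_def multisets_of_size_def by auto
  moreover have "finite (\<Union>n\<in>{..size P + size Q}. multisets_of_size S n)"
    using fS by (intro finite_UN_I finite_atMost finite_multisets_of_size)
  ultimately have "finite B" by (rule finite_subset)
  hence fin: "finite A" using AB finite_subset by blast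
  have ne: "A \<noteq> {}" unfolding A_def using triv_matching by blast
  have "Min A \<in> A" using fin ne by (rule Min_in)
  thus ?thesis unfolding A_def dW_def by auto
qed

lemma matching_cost_nonneg: "matching_cost \<Gamma> \<ge> 0"
proof -
  have "pair_cost g \<ge> 0" for g by (cases g rule: pair_cost.cases) auto
  thus ?thesis unfolding matching_cost_def by (intro sum_mset_nonneg_real)
qed

lemma dW_nonneg: "dW P Q \<ge> 0"
  using dW_att[of P Q] matching_cost_nonneg by metis

lemma m0_empty:
  assumes "standing_assms P Q 1"
  shows "P + Q = {#}"
proof (rule ccontr)
  assume "P + Q \<noteq> {#}"
  then obtain p where p: "p \<in># P + Q" by (metis multiset_nonemptyE)
  obtain x y where pxy: "p = (x, y)" by (cases p)
  have b: "0 \<le> x" "x \<le> 1" "0 \<le> y" "y \<le> 1" and d: "infdist p diag \<ge> 1"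
    using assms p pxy unfolding standing_assms_def Let_def by fastforce+
  have "infdist p diag \<le> dist p (proj p)" by (rule infdist_le[OF proj_diag])
  also have "dist p (proj p) = sqrt ((x - (x + y) / 2)^2 + (y - (x + y) / 2)^2)"
    by (simp add: pxy proj_def dist_Pair_Pair dist_real_def)
  also have "(x - (x + y) / 2)^2 + (y - (x + y) / 2)^2 = (x - y)^2 / 2"
    by (simp add: power2_eq_square field_simps)
  also have "\<bar>x - y\<bar> \<le> 1" using b by auto
  hence "(x - y)^2 \<le> 1" by (simp add: abs_square_le_1)
  hence "sqrt ((x - y)^2 / 2) < 1" using real_sqrt_less_iff[of "(x - y)^2 / 2" 1] by simp
  finally show False using d by simp
qed



lemma dT_empty: "dT_per m v {#} {#} = 0"
  unfolding dT_per_def by (auto intro!: sum.neutral simp: case_prod_beta)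

theorem lemma9:
  shows "\<exists>C'::real. \<forall>(m::nat) (\<Delta>::real) (P::point multiset) (Q::point multiset).
           \<Delta> = 2 ^ m \<and> standing_assms P Q \<Delta> \<longrightarrow>
           integral\<^sup>L (uniform_measure lborel (cbox (0, 0) (\<Delta>, \<Delta>))) (\<lambda>v. dT_per m v P Q)
             \<le> C' * log 2 \<Delta> * dW P Q"
proof (intro exI[of _ 12] allI impI, elim conjE)
  fix m :: nat and \<Delta> :: real and P Q :: "point multiset"
  assume D: "\<Delta> = 2 ^ m" and st: "standing_assms P Q \<Delta>"
  have logD: "log 2 \<Delta> = real m" using D by simp
  show "integral\<^sup>L (uniform_measure lborel (cbox (0, 0) (\<Delta>, \<Delta>))) (\<lambda>v. dT_per m v P Q)
             \<le> 12 * log 2 \<Delta> * dW P Q"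
  proof (cases "m = 0")
    case True
    hence "P + Q = {#}" using m0_empty st D by simp
    hence "P = {#}" "Q = {#}" by auto
    thus ?thesis using True logD by (simp add: dT_empty)
  next
    case False
    obtain \<Gamma> where \<Gamma>: "aug_matching P Q \<Gamma>" and dW: "dW P Q = matching_cost \<Gamma>"
      using dW_att by blast
    have c0: "matching_cost \<Gamma> \<ge> 0" by (rule matching_cost_nonneg)
    have rhs0: "0 \<le> 12 * log 2 \<Delta> * dW P Q" using logD dW c0 by simp
    show ?thesis
    proof (cases "integrable (UM m) (\<lambda>v. dT_per m v P Q)")
      case True
      have "integral\<^sup>L (UM m) (\<lambda>v. dT_per m v P Q) \<le> integral\<^sup>L (UM m) (U m \<Gamma>)"
        by (rule integral_mono[OF True U_int(1)[OF \<Gamma>] dT_le_U[OF \<Gamma>]])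
      also have "\<dots> \<le> 4 * (real m + 2) * matching_cost \<Gamma>" by (rule U_int(2)[OF \<Gamma>])
      also have "\<dots> \<le> 12 * real m * matching_cost \<Gamma>"
        using False c0 by (intro mult_right_mono) auto
      finally show ?thesis using D logD dW by simp
    next
      case False
      hence "integral\<^sup>L (UM m) (\<lambda>v. dT_per m v P Q) = 0" by (rule not_integrable_integral_eq)
      thus ?thesis using D rhs0 by simp
    qed
  qed
qed

end
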